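(* Suppose that $\langle s_\alpha : \alpha \in S \rangle$ is a disjoint stationary sequence on $\omega_2$. Then $(\omega_2 \cap \mathrm{cof}(\omega_1)) \setminus S$ is stationary in $\omega_2$.
   Context: For an uncountable ordinal $\alpha < \omega_2$, $P_{\omega_1}(\alpha)$ is the set of countable subsets of $\alpha$; a set $c \subseteq P_{\omega_1}(\alpha)$ is club if it is cofinal (under $\subseteq$) and closed under unions of countable increasing sequences, and $s \subseteq P_{\omega_1}(\alpha)$ is stationary if it meets every club in $P_{\omega_1}(\alpha)$. A disjoint stationary sequence on $\omega_2$ is a sequence $\langle s_\alpha : \alpha \in S \rangle$, where $S$ is a stationary subset of $\omega_2 \cap \mathrm{cof}(\omega_1)$, such that each $s_\alpha$ is a stationary subset of $P_{\omega_1}(\alpha)$ and $s_\alpha \cap s_\beta = \emptyset$ for all $\alpha < \beta$ in $S$. *)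

theory Defs
  imports Main "HOL-Library.Countable_Set"
begin

text \<open>Ordinals below omega_2 are modelled by the elements of a well-ordered type 'a
  whose order type is omega_2: every proper initial segment has cardinality at most
  aleph_1 (= cardSuc natLeq), while the whole type has cardinality bigger than aleph_1.\<close>

definition omega2_order :: "'a::wellorder itself \<Rightarrow> bool" where
  "omega2_order (_ :: 'a itself) \<longleftrightarrow>
     (\<forall>x::'a. (card_of {y. y < x}, cardSuc natLeq) \<in> ordLeq) \<and>
     (card_of (UNIV :: 'a set), cardSuc natLeq) \<notin> ordLeq"

definition cofinal_in :: "'a::wellorder set \<Rightarrow> 'a \<Rightarrow> bool" where
  "cofinal_in C \<alpha> \<longleftrightarrow> C \<subseteq> {..<\<alpha>} \<and> (\<forall>\<beta><\<alpha>. \<exists>\<gamma>\<in>C. \<beta> \<le> \<gamma>)"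

definition ordertype_omega1 :: "'a::wellorder set \<Rightarrow> bool" where
  "ordertype_omega1 C \<longleftrightarrow> \<not> countable C \<and> (\<forall>x\<in>C. countable {y\<in>C. y < x})"

definition cof_omega1 :: "'a::wellorder \<Rightarrow> bool" where
  "cof_omega1 \<alpha> \<longleftrightarrow>
     (\<exists>C. cofinal_in C \<alpha> \<and> ordertype_omega1 C) \<and>
     (\<forall>C. cofinal_in C \<alpha> \<longrightarrow> \<not> countable C)"

definition club_ord :: "'a::wellorder set \<Rightarrow> bool" where
  "club_ord C \<longleftrightarrow>
     (\<forall>x. \<exists>y\<in>C. x \<le> y) \<and>
     (\<forall>\<alpha>. (\<exists>\<gamma>\<in>C. \<gamma> < \<alpha>) \<and> (\<forall>\<beta><\<alpha>. \<exists>\<gamma>\<in>C. \<beta> < \<gamma> \<and> \<gamma> < \<alpha>) \<longrightarrow> \<alpha> \<in> C)"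

definition stationary_ord :: "'a::wellorder set \<Rightarrow> bool" where
  "stationary_ord T \<longleftrightarrow> (\<forall>C. club_ord C \<longrightarrow> T \<inter> C \<noteq> {})"

definition Pw1 :: "'a::wellorder \<Rightarrow> 'a set set" where
  "Pw1 \<alpha> = {x. x \<subseteq> {..<\<alpha>} \<and> countable x}"

definition club_P :: "'a::wellorder \<Rightarrow> 'a set set \<Rightarrow> bool" where
  "club_P \<alpha> c \<longleftrightarrow>
     c \<subseteq> Pw1 \<alpha> \<and>
     (\<forall>x\<in>Pw1 \<alpha>. \<exists>y\<in>c. x \<subseteq> y) \<and>
     (\<forall>f :: nat \<Rightarrow> 'a set. (\<forall>n. f n \<in> c) \<and> (\<forall>n. f n \<subseteq> f (Suc n)) \<longrightarrow> (\<Union>n. f n) \<in> c)"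

definition stationary_P :: "'a::wellorder \<Rightarrow> 'a set set \<Rightarrow> bool" where
  "stationary_P \<alpha> s \<longleftrightarrow> s \<subseteq> Pw1 \<alpha> \<and> (\<forall>c. club_P \<alpha> c \<longrightarrow> s \<inter> c \<noteq> {})"

definition disjoint_stationary_sequence :: "'a::wellorder set \<Rightarrow> ('a \<Rightarrow> 'a set set) \<Rightarrow> bool" where
  "disjoint_stationary_sequence S s \<longleftrightarrow>
     S \<subseteq> {\<alpha>. cof_omega1 \<alpha>} \<and> stationary_ord S \<and>
     (\<forall>\<alpha>\<in>S. stationary_P \<alpha> (s \<alpha>)) \<and>
     (\<forall>\<alpha>\<in>S. \<forall>\<beta>\<in>S. \<alpha> < \<beta> \<longrightarrow> s \<alpha> \<inter> s \<beta> = {})"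

end

theory Submission
  imports Defs "HOL-Library.Countable_Set_Type"
begin
unbundle cardinal_syntax

definition B0 :: "nat set set" where "B0 = Field (cardSuc natLeq)"
definition small :: "'b set \<Rightarrow> bool" where "small A \<longleftrightarrow> |A| \<le>o |B0|"

lemma B0_iso: "|B0| =o cardSuc natLeq"
  unfolding B0_def by (simp add: card_of_Field_ordIso cardSuc_Card_order natLeq_Card_order)

lemma small_iff: "small A \<longleftrightarrow> |A| \<le>o cardSuc natLeq"
  unfolding small_def using B0_iso ordLeq_ordIso_trans ordIso_symmetric by blast

lemma countable_small: "countable A \<Longrightarrow> small A"
  unfolding small_iff countable_card_le_natLeq
  using cardSuc_greater natLeq_Card_order ordLeq_ordLess_trans ordLess_imp_ordLeq by blast

lemma small_subset: "small A \<Longrightarrow> B \<subseteq> A \<Longrightarrow> small B"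
  unfolding small_def using card_of_mono1 ordLeq_transitive by blast

lemma B0_infinite: "\<not> finite B0"
proof
  assume "finite B0"
  hence "countable B0" by (rule countable_finite)
  hence "|B0| \<le>o natLeq" by (simp add: countable_card_le_natLeq)
  hence "cardSuc natLeq \<le>o natLeq" using B0_iso ordIso_ordLeq_trans ordIso_symmetric by blast
  thus False using cardSuc_greater natLeq_Card_order not_ordLess_ordLeq by blast
qed

lemma small_UN: "small I \<Longrightarrow> (\<And>i. i \<in> I \<Longrightarrow> small (A i)) \<Longrightarrow> small (\<Union>i\<in>I. A i)"
  unfolding small_def using card_of_UNION_ordLeq_infinite[OF B0_infinite] by blast

lemma uncountable_big: "\<not> countable A \<Longrightarrow> |B0| \<le>o |A|"
proof -
  assume "\<not> countable A"
  hence "\<not> |A| \<le>o natLeq" by (simp add: countable_card_le_natLeq)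
  hence "natLeq <o |A|" using not_ordLeq_iff_ordLess card_of_Well_order natLeq_Well_order by blast
  hence "cardSuc natLeq \<le>o |A|" using cardSuc_least natLeq_Card_order card_of_Card_order by blast
  thus ?thesis using B0_iso ordIso_ordLeq_trans by blast
qed

lemma uncountable_B0: "\<not> countable B0"
proof
  assume "countable B0"
  hence "|B0| \<le>o natLeq" by (simp add: countable_card_le_natLeq)
  hence "cardSuc natLeq \<le>o natLeq" using B0_iso ordIso_ordLeq_trans ordIso_symmetric by blast
  thus False using cardSuc_greater natLeq_Card_order not_ordLess_ordLeq by blast
qed

lemma small_Un: "small A \<Longrightarrow> small B \<Longrightarrow> small (A \<union> B)"
proof -
  assume a: "small A" "small B"
  have "A \<union> B = (\<Union>b\<in>{True,False}. if b then A else B)" by auto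
  moreover have "small (\<Union>b\<in>{True,False}. if b then A else B)"
    by (rule small_UN) (auto intro: countable_small simp: a)
  ultimately show ?thesis by simp
qed

definition W :: "'a::wellorder set" where "W = {x. countable {y. y < x}}"
definition om1 :: "'a::wellorder" where "om1 = (LEAST x. x \<notin> W)"

locale ctx =
  fixes S :: "'a::wellorder set" and s :: "'a \<Rightarrow> 'a set set" and C :: "'a set"
  assumes om: "omega2_order TYPE('a)"
    and dss: "disjoint_stationary_sequence S s"
    and club: "club_ord C"
    and sub: "C \<inter> {\<alpha>. cof_omega1 \<alpha>} \<subseteq> S"
begin

lemma seg_small: "small {y::'a. y < x}"
  using om unfolding omega2_order_def small_iff by blast

lemma univ_not_small: "\<not> small (UNIV::'a set)"
  using om unfolding omega2_order_def small_iff by blast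

lemma le_small: "small {y::'a. y \<le> x}"
proof -
  have "{y::'a. y \<le> x} = {x} \<union> {y. y < x}" by auto
  thus ?thesis using small_Un[OF countable_small[of "{x}"] seg_small[of x]] by simp
qed

lemma bounded: "small (X::'a set) \<Longrightarrow> \<exists>z. \<forall>x\<in>X. x < z"
proof -
  assume "small X"
  hence "small (\<Union>x\<in>X. {y. y \<le> x})" by (intro small_UN le_small)
  hence "(\<Union>x\<in>X. {y. y \<le> x}) \<noteq> UNIV" using univ_not_small by (metis (no_types))
  then obtain z where "z \<notin> (\<Union>x\<in>X. {y. y \<le> x})" by blast
  hence "\<forall>x\<in>X. x < z" by (auto simp: not_le)
  thus ?thesis by blast
qed



lemma W_down: "(x::'a) \<in> W \<Longrightarrow> y < x \<Longrightarrow> y \<in> W"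
proof -
  assume "x \<in> W" "y < x"
  hence "countable {z. z < x}" "{z. z < y} \<subseteq> {z. z < x}" by (auto simp: W_def)
  hence "countable {z. z < y}" using countable_subset by blast
  thus "y \<in> W" by (simp add: W_def)
qed

lemma W_ne_UNIV: "(W::'a set) \<noteq> UNIV"
proof
  assume WU: "(W::'a set) = UNIV"
  have cnt: "countable {y. y < x}" for x :: 'a
  proof -
    have "x \<in> W" using WU by simp
    thus ?thesis by (simp add: W_def)
  qed
  have "\<not> countable (UNIV::'a set)" using univ_not_small countable_small by blast
  hence "|B0| \<le>o |UNIV::'a set|" by (rule uncountable_big)
  hence "\<exists>f. inj_on f B0 \<and> f ` B0 \<subseteq> (UNIV::'a set)" by (rule iffD2[OF card_of_ordLeq[of B0 "UNIV::'a set"]])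
  then obtain f :: "nat set \<Rightarrow> 'a" where f: "inj_on f B0" by blast
  define X where "X = f ` B0"
  have "bij_betw f B0 X" using f unfolding X_def bij_betw_def by simp
  hence "|B0| =o |X|" by (rule card_of_ordIsoI)
  hence "|X| =o |B0|" by (rule ordIso_symmetric)
  hence sX: "small X" unfolding small_def by (rule ordIso_imp_ordLeq)
  have uX: "\<not> countable X"
  proof
    assume "countable X"
    hence "countable B0" using f countable_image_inj_on unfolding X_def by blast
    thus False using uncountable_B0 by simp
  qed
  show False
  proof (cases "\<exists>x. \<forall>y\<in>X. y \<le> x")
    case True
    then obtain x where x: "\<forall>y\<in>X. y \<le> x" by blast
    have "X \<subseteq> insert x {y. y < x}"
    proof
      fix y assume "y \<in> X"
      hence "y \<le> x" using x by blast
      thus "y \<in> insert x {y. y < x}" by (cases "y = x") auto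
    qed
    moreover have "countable (insert x {y. y < x})" using cnt[of x] by simp
    ultimately show False using uX countable_subset by blast
  next
    case False
    have "\<exists>y\<in>X. x < y" for x using False not_le by blast
    hence eq: "(\<Union>x\<in>X. {y. y < x}) = UNIV" by blast
    have "small (\<Union>x\<in>X. {y. y < x})"
      by (rule small_UN[OF sX]) (rule countable_small[OF cnt])
    hence "small (UNIV::'a set)" by (simp only: eq)
    thus False using univ_not_small by simp
  qed
qed



lemma W_eq: "(W::'a set) = {x. x < om1}"
proof -
  obtain x0 :: 'a where "x0 \<notin> W" using W_ne_UNIV by blast
  hence n: "(om1::'a) \<notin> W" unfolding om1_def by (rule LeastI)
  show ?thesis
  proof (rule set_eqI, rule iffI)
    fix x :: 'a assume xW: "x \<in> W"
    show "x \<in> {x. x < om1}"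
    proof (rule ccontr)
      assume "x \<notin> {x. x < om1}"
      hence "om1 \<le> x" by simp
      hence "om1 = x \<or> om1 < x" using le_imp_less_or_eq by blast
      thus False using n W_down[OF xW] xW by blast
    qed
  next
    fix x :: 'a assume "x \<in> {x. x < om1}"
    hence "x < om1" by simp
    thus "x \<in> W" unfolding om1_def by (rule not_less_Least[THEN notnotD])
  qed
qed

lemma W_small: "small (W::'a set)" by (subst W_eq) (rule seg_small)

lemma W_uncountable: "\<not> countable (W::'a set)"
proof
  assume "countable (W::'a set)"
  hence "countable {y. y < (om1::'a)}" using W_eq by simp
  hence "(om1::'a) \<in> W" by (simp add: W_def)
  hence "(om1::'a) \<in> {x. x < om1}" using W_eq by blast
  thus False by simp
qed

lemma W_nomax: "(i::'a) \<in> W \<Longrightarrow> \<exists>j\<in>W. i < j"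
proof (rule ccontr)
  assume iW: "i \<in> W" and nx: "\<not> (\<exists>j\<in>W. i < j)"
  have "W \<subseteq> insert i {y. y < i}"
  proof
    fix j :: 'a assume "j \<in> W"
    hence "\<not> i < j" using nx by blast
    hence "j \<le> i" by (simp only: not_less)
    hence "j = i \<or> j < i" using le_imp_less_or_eq by blast
    thus "j \<in> insert i {y. y < i}" by simp
  qed
  moreover have "countable (insert i {y. y < i})" using iW unfolding W_def by simp
  ultimately show False using W_uncountable countable_subset by blast
qed

lemma W_bound: "countable X \<Longrightarrow> X \<subseteq> (W::'a set) \<Longrightarrow> \<exists>z\<in>W. \<forall>x\<in>X. x < z"
proof -
  assume X: "countable X" "X \<subseteq> W"
  have "countable (\<Union>x\<in>X. insert x {y. y < x})"
  proof (rule countable_UN[OF X(1)])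
    fix x assume "x \<in> X"
    hence "x \<in> W" using X(2) by blast
    thus "countable (insert x {y. y < x})" by (simp add: W_def)
  qed
  hence "\<not> W \<subseteq> (\<Union>x\<in>X. insert x {y. y < x})" using W_uncountable countable_subset by blast
  then obtain z :: 'a where z: "z \<in> W" "z \<notin> (\<Union>x\<in>X. insert x {y. y < x})" by blast
  have "\<forall>x\<in>X. x < z"
  proof
    fix x assume "x \<in> X"
    hence "z \<noteq> x" "\<not> z < x" using z(2) by blast+
    thus "x < z" by simp
  qed
  thus ?thesis using z(1) by blast
qed

lemma W_surj: "\<exists>e. {y. y < (g::'a)} \<subseteq> e ` (W::'a set)"
proof (cases "{y. y < g} = {}")
  case True thus ?thesis by auto
next
  case False
  have "|{y. y < g}| \<le>o |B0|" using seg_small[of g] unfolding small_def .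
  moreover have "|B0| \<le>o |W::'a set|" using W_uncountable by (rule uncountable_big)
  ultimately have "|{y. y < g}| \<le>o |W::'a set|" using ordLeq_transitive by blast
  hence "\<exists>e :: 'a \<Rightarrow> 'a. e ` W = {y. y < g}" by (rule iffD2[OF card_of_ordLeq2[OF False]])
  thus ?thesis by (metis order_refl)
qed

end

context ctx
begin

definition FF :: "'a set \<Rightarrow> 'a" where "FF b = (SOME g. g \<in> S \<and> b \<in> s g)"
definition cc :: "'a set \<Rightarrow> 'a" where "cc b = (LEAST z. z \<in> C \<and> (\<forall>y\<in>b. y < z))"
definition ee :: "'a \<Rightarrow> 'a \<Rightarrow> 'a" where "ee g = (SOME e. {y. y < g} \<subseteq> e ` W)"
definition step :: "'a \<Rightarrow> 'a set \<Rightarrow> 'a set" where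
  "step j b = b \<union> {FF b, cc b} \<union> (\<Union>g\<in>b. ee g ` {k. k \<le> j})"
definition aa :: "'a \<Rightarrow> 'a set" where
  "aa = wfrec {(x, y). x < y} (\<lambda>f i. \<Union>j\<in>{j. j < i}. step j (f j))"

lemma aa_eq: "aa i = (\<Union>j\<in>{j. j < i}. step j (aa j))"
proof -
  have "aa i = (\<lambda>f i. \<Union>j\<in>{j. j < i}. step j (f j)) (cut aa {(x, y). x < y} i) i"
    unfolding aa_def by (rule wfrec[OF wf])
  also have "\<dots> = (\<Union>j\<in>{j. j < i}. step j (aa j))"
    by (simp add: cut_apply)
  finally show ?thesis .
qed

lemma step_sub: "b \<subseteq> step j b" unfolding step_def by blast
lemma FF_step: "FF b \<in> step j b" unfolding step_def by blast
lemma cc_step: "cc b \<in> step j b" unfolding step_def by blast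
lemma ee_step: "g \<in> b \<Longrightarrow> k \<le> j \<Longrightarrow> ee g k \<in> step j b" unfolding step_def by blast

lemma step_aa: "i < j \<Longrightarrow> step i (aa i) \<subseteq> aa j"
  by (subst (2) aa_eq) blast

lemma aa_mono: "i \<le> j \<Longrightarrow> aa i \<subseteq> aa j"
  using step_aa step_sub by (metis le_less order_refl subset_trans)

lemma ee_prop: "y < g \<Longrightarrow> \<exists>k\<in>W. y = ee g k"
proof -
  assume "y < g"
  have "{y. y < g} \<subseteq> ee g ` W" unfolding ee_def using W_surj by (rule someI_ex)
  thus ?thesis using \<open>y < g\<close> by blast
qed

lemma C_unb: "\<exists>y\<in>C. x \<le> y" using club unfolding club_ord_def by blast

lemma cc_prop: "small b \<Longrightarrow> cc b \<in> C \<and> (\<forall>y\<in>b. y < cc b)"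
proof -
  assume "small b"
  then obtain z where z: "\<forall>x\<in>b. x < z" using bounded by blast
  obtain y where y: "y \<in> C" "z \<le> y" using C_unb by blast
  have "y \<in> C \<and> (\<forall>x\<in>b. x < y)" using y z less_le_trans by blast
  thus ?thesis unfolding cc_def by (rule LeastI)
qed

lemma aa_countable: "i \<in> W \<Longrightarrow> countable (aa i)"
proof (induction i rule: less_induct)
  case (less i)
  have "countable (\<Union>j\<in>{j. j < i}. step j (aa j))"
  proof (rule countable_UN)
    show "countable {j. j < i}" using less.prems by (simp add: W_def)
  next
    fix j assume "j \<in> {j. j < i}"
    hence ji: "j < i" by simp
    hence jW: "j \<in> W" using W_down less.prems by blast
    hence ca: "countable (aa j)" using less.IH ji by blast
    have "countable {k. k \<le> j}"
    proof -
      have "{k. k \<le> j} = insert j {k. k < j}" by (auto simp: le_less)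
      thus ?thesis using jW by (simp add: W_def)
    qed
    hence "countable (\<Union>g\<in>aa j. ee g ` {k. k \<le> j})" using ca by (intro countable_UN countable_image) auto
    thus "countable (step j (aa j))" unfolding step_def using ca by simp
  qed
  thus ?case by (subst aa_eq)
qed

definition U :: "'a set" where "U = (\<Union>i\<in>W. aa i)"

lemma U_small: "small U"
  unfolding U_def by (intro small_UN W_small countable_small aa_countable)

lemma step_U: "i \<in> W \<Longrightarrow> step i (aa i) \<subseteq> U"
proof -
  assume "i \<in> W"
  then obtain j :: 'a where "j \<in> W" "i < j" using W_nomax by blast
  thus ?thesis using step_aa unfolding U_def by blast
qed

lemma U_down: "x \<in> U \<Longrightarrow> y < x \<Longrightarrow> y \<in> U"
proof -
  assume "x \<in> U" "y < x"
  then obtain i where i: "i \<in> W" "x \<in> aa i" unfolding U_def by blast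
  obtain k where k: "k \<in> W" "y = ee x k" using ee_prop \<open>y < x\<close> by blast
  define m where "m = max i k"
  have mW: "m \<in> W" unfolding m_def using i k by (simp add: max_def)
  have "x \<in> aa m" using i aa_mono unfolding m_def by (meson max.cobounded1 subsetD)
  hence "y \<in> step m (aa m)" using k ee_step unfolding m_def by simp
  thus ?thesis using step_U mW by blast
qed

definition dl :: 'a where "dl = (LEAST x. x \<notin> U)"

lemma U_eq: "U = {..<dl}"
proof -
  obtain x0 where "x0 \<notin> U" using U_small univ_not_small by (metis UNIV_eq_I)
  hence n: "dl \<notin> U" unfolding dl_def by (rule LeastI)
  show ?thesis
  proof (rule set_eqI, rule iffI)
    fix x assume xU: "x \<in> U"
    show "x \<in> {..<dl}"
    proof (rule ccontr)
      assume "x \<notin> {..<dl}"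
      hence "dl = x \<or> dl < x" by (auto simp: le_less)
      thus False using n U_down[OF xU] xU by blast
    qed
  next
    fix x assume "x \<in> {..<dl}"
    hence "x < dl" by simp
    thus "x \<in> U" unfolding dl_def by (rule not_less_Least[THEN notnotD])
  qed
qed

lemma cc_aa: "i \<in> W \<Longrightarrow> cc (aa i) \<in> C \<and> (\<forall>y\<in>aa i. y < cc (aa i)) \<and> cc (aa i) < dl"
proof -
  assume iW: "i \<in> W"
  have "cc (aa i) \<in> C \<and> (\<forall>y\<in>aa i. y < cc (aa i))"
    using cc_prop countable_small aa_countable iW by blast
  moreover have "cc (aa i) \<in> U" using step_U iW cc_step by blast
  ultimately show ?thesis using U_eq by blast
qed

lemma in_U: "x \<in> U \<Longrightarrow> \<exists>i\<in>W. x \<in> aa i" unfolding U_def by blast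

lemma cover: "countable X \<Longrightarrow> X \<subseteq> U \<Longrightarrow> \<exists>z\<in>W. X \<subseteq> aa z"
proof -
  assume X: "countable X" "X \<subseteq> U"
  define idx where "idx x = (SOME i. i \<in> W \<and> x \<in> aa i)" for x
  have idx: "idx x \<in> W \<and> x \<in> aa (idx x)" if "x \<in> X" for x
    unfolding idx_def using in_U X(2) that by (metis (mono_tags, lifting) someI_ex subsetD)
  have "countable (idx ` X)" using X(1) by simp
  moreover have "idx ` X \<subseteq> W" using idx by blast
  ultimately have "\<exists>z\<in>W. \<forall>i\<in>idx ` X. i < z" by (rule W_bound)
  then obtain z :: 'a where z: "z \<in> W" "\<forall>i\<in>idx ` X. i < z" by (elim bexE) simp
  have "X \<subseteq> aa z"
  proof
    fix x assume xX: "x \<in> X"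
    have "idx x < z" using z(2) xX by simp
    hence "aa (idx x) \<subseteq> aa z" by (intro aa_mono less_imp_le)
    moreover have "x \<in> aa (idx x)" using idx[OF xX] by simp
    ultimately show "x \<in> aa z" by blast
  qed
  thus ?thesis using z(1) by blast
qed

lemma W_ne: "(W::'a set) \<noteq> {}" using W_uncountable by auto

lemma dl_C: "dl \<in> C"
proof -
  obtain i :: 'a where iW: "i \<in> W" using W_ne by blast
  have "\<exists>\<gamma>\<in>C. \<gamma> < dl" using cc_aa[OF iW] by blast
  moreover have "\<forall>\<beta><dl. \<exists>\<gamma>\<in>C. \<beta> < \<gamma> \<and> \<gamma> < dl"
  proof (intro allI impI)
    fix \<beta> assume "\<beta> < dl"
    hence "\<beta> \<in> U" using U_eq by blast
    then obtain i where "i \<in> W" "\<beta> \<in> aa i" using in_U by blast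
    thus "\<exists>\<gamma>\<in>C. \<beta> < \<gamma> \<and> \<gamma> < dl" using cc_aa by blast
  qed
  ultimately show ?thesis using club unfolding club_ord_def by blast
qed

lemma cc_mono: "i \<in> W \<Longrightarrow> j \<in> W \<Longrightarrow> i < j \<Longrightarrow> cc (aa i) < cc (aa j)"
proof -
  assume "i \<in> W" "j \<in> W" "i < j"
  hence "cc (aa i) \<in> aa j" using step_aa cc_step by blast
  thus ?thesis using cc_aa \<open>j \<in> W\<close> by blast
qed

lemma dl_cof: "cof_omega1 dl"
proof -
  define Cd where "Cd = (\<lambda>i. cc (aa i)) ` W"
  have cof: "cofinal_in Cd dl"
    unfolding cofinal_in_def
  proof
    show "Cd \<subseteq> {..<dl}"
    proof
      fix x assume "x \<in> Cd"
      then obtain i where "i \<in> W" "x = cc (aa i)" unfolding Cd_def by blast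
      thus "x \<in> {..<dl}" using cc_aa[of i] by simp
    qed
    show "\<forall>\<beta><dl. \<exists>\<gamma>\<in>Cd. \<beta> \<le> \<gamma>"
    proof (intro allI impI)
      fix \<beta> assume "\<beta> < dl"
      hence "\<beta> \<in> U" using U_eq by blast
      then obtain i where i: "i \<in> W" "\<beta> \<in> aa i" using in_U by blast
      hence "\<beta> < cc (aa i)" using cc_aa[OF i(1)] by blast
      moreover have "cc (aa i) \<in> Cd" unfolding Cd_def using i(1) by (rule imageI)
      ultimately show "\<exists>\<gamma>\<in>Cd. \<beta> \<le> \<gamma>" by (intro bexI[of _ "cc (aa i)"]) simp_all
    qed
  qed
  have inj: "inj_on (\<lambda>i. cc (aa i)) W"
  proof (rule inj_onI)
    fix i j assume ij: "i \<in> W" "j \<in> W" "cc (aa i) = cc (aa j)"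
    show "i = j"
    proof (rule ccontr)
      assume "i \<noteq> j"
      hence "i < j \<or> j < i" by (rule neq_iff[THEN iffD1])
      thus False
      proof
        assume "i < j" thus False using cc_mono[OF ij(1) ij(2)] ij(3) by simp
      next
        assume "j < i" thus False using cc_mono[OF ij(2) ij(1)] ij(3) by simp
      qed
    qed
  qed
  have ot: "ordertype_omega1 Cd"
    unfolding ordertype_omega1_def
  proof
    show "\<not> countable Cd"
    proof
      assume "countable Cd"
      hence "countable (W::'a set)" unfolding Cd_def using inj countable_image_inj_on by blast
      thus False using W_uncountable by simp
    qed
    show "\<forall>x\<in>Cd. countable {y \<in> Cd. y < x}"
    proof
      fix x assume "x \<in> Cd"
      then obtain i where i: "i \<in> W" "x = cc (aa i)" unfolding Cd_def by blast
      have "{y \<in> Cd. y < x} \<subseteq> (\<lambda>i. cc (aa i)) ` {j. j < i}"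
      proof
        fix y assume "y \<in> {y \<in> Cd. y < x}"
        then obtain j where j: "j \<in> W" "y = cc (aa j)" "y < x" unfolding Cd_def by blast
        have "j < i"
        proof (rule ccontr)
          assume "\<not> j < i"
          hence "i \<le> j" by simp
          hence "i = j \<or> i < j" by (rule le_imp_less_or_eq[THEN disjE]) simp_all
          thus False
          proof
            assume "i = j" thus False using i j by simp
          next
            assume "i < j" thus False using cc_mono[OF i(1) j(1)] i j by simp
          qed
        qed
        thus "y \<in> (\<lambda>i. cc (aa i)) ` {j. j < i}" using j(2) by simp
      qed
      moreover have "countable {j. j < i}" using i(1) by (simp add: W_def)
      ultimately show "countable {y \<in> Cd. y < x}" by (rule countable_subset[OF _ countable_image])
    qed
  qed
  have "\<forall>X. cofinal_in X dl \<longrightarrow> \<not> countable X"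
  proof (intro allI impI notI)
    fix X assume cX: "cofinal_in X dl" and ctX: "countable X"
    have "X \<subseteq> {..<dl}" using cX unfolding cofinal_in_def by simp
    hence "X \<subseteq> U" using U_eq by simp
    with ctX have "\<exists>z\<in>W. X \<subseteq> aa z" by (rule cover)
    then obtain z where z: "z \<in> W" "X \<subseteq> aa z" by (elim bexE) simp
    have czd: "cc (aa z) < dl" using cc_aa[OF z(1)] by simp
    have "\<forall>\<beta><dl. \<exists>\<gamma>\<in>X. \<beta> \<le> \<gamma>" using cX unfolding cofinal_in_def by simp
    hence "\<exists>\<gamma>\<in>X. cc (aa z) \<le> \<gamma>" using czd by simp
    then obtain g where g: "g \<in> X" "cc (aa z) \<le> g" by (elim bexE) simp
    have "g \<in> aa z" using g(1) z(2) by (rule subsetD[rotated])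
    hence "g < cc (aa z)" using cc_aa[OF z(1)] by simp
    thus False using g(2) by simp
  qed
  thus ?thesis unfolding cof_omega1_def using cof ot by blast
qed

lemma False_main: False
proof -
  have dS: "dl \<in> S" using sub dl_C dl_cof by blast
  have stat: "stationary_P dl (s dl)" using dss dS unfolding disjoint_stationary_sequence_def by blast
  define D where "D = aa ` W"
  have "club_P dl D"
    unfolding club_P_def
  proof (intro conjI)
    show "D \<subseteq> Pw1 dl"
    proof
      fix y assume "y \<in> D"
      then obtain i where i: "i \<in> W" "y = aa i" unfolding D_def by blast
      have "aa i \<subseteq> U" unfolding U_def using i(1) by (rule UN_upper)
      hence "y \<subseteq> {..<dl}" using i(2) U_eq by simp
      moreover have "countable y" using aa_countable[OF i(1)] i(2) by simp
      ultimately show "y \<in> Pw1 dl" unfolding Pw1_def by simp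
    qed
    show "\<forall>x\<in>Pw1 dl. \<exists>y\<in>D. x \<subseteq> y"
    proof
      fix x assume "x \<in> Pw1 dl"
      hence "countable x" "x \<subseteq> U" unfolding Pw1_def using U_eq by auto
      hence "\<exists>z\<in>W. x \<subseteq> aa z" by (rule cover)
      then obtain z where z: "z \<in> W" "x \<subseteq> aa z" by (elim bexE) simp
      have "aa z \<in> D" unfolding D_def using z(1) by (rule imageI)
      thus "\<exists>y\<in>D. x \<subseteq> y" using z(2) by blast
    qed
    show "\<forall>f. (\<forall>n. f n \<in> D) \<and> (\<forall>n. f n \<subseteq> f (Suc n)) \<longrightarrow> (\<Union>n. f n) \<in> D"
    proof (intro allI impI)
      fix f :: "nat \<Rightarrow> 'a set"
      assume "(\<forall>n. f n \<in> D) \<and> (\<forall>n. f n \<subseteq> f (Suc n))"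
      hence "\<forall>n. \<exists>i. i \<in> W \<and> f n = aa i" unfolding D_def by blast
      then obtain ix where ix: "\<And>n. ix n \<in> W" "\<And>n. f n = aa (ix n)" by metis
      show "(\<Union>n. f n) \<in> D"
      proof (cases "\<exists>n. \<forall>m. ix m \<le> ix n")
        case True
        then obtain n where n: "\<forall>m. ix m \<le> ix n" by (elim exE)
        have "(\<Union>n. f n) = aa (ix n)"
        proof
          show "(\<Union>n. f n) \<subseteq> aa (ix n)"
          proof (rule UN_least)
            fix m show "f m \<subseteq> aa (ix n)" unfolding ix(2) using n by (intro aa_mono) simp
          qed
          show "aa (ix n) \<subseteq> (\<Union>n. f n)" unfolding ix(2) by (rule UN_upper) simp
        qed
        moreover have "aa (ix n) \<in> D" unfolding D_def using ix(1) by (rule imageI)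
        ultimately show ?thesis by simp
      next
        case False
        have up: "\<exists>m. ix n < ix m" for n
        proof -
          have "\<not> (\<forall>m. ix m \<le> ix n)" using False by simp
          then obtain m where "\<not> ix m \<le> ix n" by blast
          thus ?thesis by (simp add: not_le) blast
        qed
        have "countable (range ix)" by simp
        moreover have "range ix \<subseteq> W" using ix(1) by (simp add: image_subset_iff)
        ultimately have "\<exists>z\<in>W. \<forall>i\<in>range ix. i < z" by (rule W_bound)
        then obtain z where z: "z \<in> W" "\<forall>i\<in>range ix. i < z" by (elim bexE) simp
        have zn: "\<forall>n. ix n < z" using z(2) by simp
        define t where "t = (LEAST z. \<forall>n. ix n < z)"
        have t: "\<forall>n. ix n < t" unfolding t_def using zn by (rule LeastI)
        have "t \<le> z" unfolding t_def using zn by (rule Least_le)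
        hence tW: "t \<in> W"
        proof (rule le_imp_less_or_eq[THEN disjE])
          assume "t < z" thus "t \<in> W" using z(1) W_down by blast
        next
          assume "t = z" thus "t \<in> W" using z(1) by simp
        qed
        have "(\<Union>n. f n) = aa t"
        proof
          show "(\<Union>n. f n) \<subseteq> aa t"
          proof (rule UN_least)
            fix m show "f m \<subseteq> aa t" unfolding ix(2) using t by (intro aa_mono less_imp_le) simp
          qed
          show "aa t \<subseteq> (\<Union>n. f n)"
          proof (subst aa_eq, rule UN_least)
            fix j assume "j \<in> {j. j < t}"
            hence "j < t" by simp
            hence "\<not> (\<forall>n. ix n < j)" unfolding t_def by (rule not_less_Least)
            then obtain n where "\<not> ix n < j" by blast
            hence jn: "j \<le> ix n" by simp
            obtain m where "ix n < ix m" using up by blast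
            hence "j < ix m" using jn by (rule le_less_trans[rotated])
            hence "step j (aa j) \<subseteq> aa (ix m)" by (rule step_aa)
            hence "step j (aa j) \<subseteq> f m" using ix(2) by simp
            thus "step j (aa j) \<subseteq> (\<Union>n. f n)" by blast
          qed
        qed
        moreover have "aa t \<in> D" unfolding D_def using tW by (rule imageI)
        ultimately show ?thesis by simp
      qed
    qed
  qed
  hence "s dl \<inter> D \<noteq> {}" using stat unfolding stationary_P_def by blast
  then obtain i where iW: "i \<in> W" and ai: "aa i \<in> s dl" unfolding D_def by blast
  have "\<exists>g. g \<in> S \<and> aa i \<in> s g" using dS ai by blast
  hence F: "FF (aa i) \<in> S \<and> aa i \<in> s (FF (aa i))" unfolding FF_def by (rule someI_ex)
  have "FF (aa i) \<in> U" using step_U iW FF_step by blast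
  hence lt: "FF (aa i) < dl" using U_eq by blast
  have "s (FF (aa i)) \<inter> s dl = {}" using dss F dS lt unfolding disjoint_stationary_sequence_def by blast
  thus False using F ai by blast
qed

end


theorem proposition1p5:
  fixes S :: "'a::wellorder set" and s :: "'a \<Rightarrow> 'a set set"
  assumes "omega2_order TYPE('a)"
    and "disjoint_stationary_sequence S s"
  shows "stationary_ord ({\<alpha>. cof_omega1 \<alpha>} - S)"
  unfolding stationary_ord_def
proof (intro allI impI notI)
  fix C :: "'a set"
  assume cC: "club_ord C" and e: "({\<alpha>. cof_omega1 \<alpha>} - S) \<inter> C = {}"
  have sub: "C \<inter> {\<alpha>. cof_omega1 \<alpha>} \<subseteq> S" using e by blast
  interpret ctx S s C using assms cC sub by unfold_locales
  show False by (rule False_main)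
qed

end
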